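(* Let $I$ be a compact metric space, $\mu$ a non-negative finite Borel measure on $I$, $N\ge2$, $N'\le N$ natural numbers, and $s$ a surplus function satisfying Assumptions (A1) and (A2). Then the function $\hat s$ on $I^{N!}/\sim_{N!}$ is upper semi-continuous, and there is a lower semi-continuous function $\hat a\in L^1(I,\mu)$ such that $\hat s([i_1,\dots,i_{N!}])\le\sum_{k=1}^{N!}\hat a(i_k)$ for all $i_1,\dots,i_{N!}\in I$.
   Context: For $n\in\mathbb{N}$, $I^n/\sim_n$ is the quotient of $I^n$ by permutation of coordinates (quotient topology), the class of $(i_1,\dots,i_n)$ written $[i_1,\dots,i_n]$; $\mathcal{G}_n=I^n/\sim_n$ is the set of $n$-person groups and $\mathcal{G}=\bigcup_{n=N'}^N\mathcal{G}_n$. A surplus function is $s:\mathcal{G}\to[0,\infty)$, $s_n=s|_{\mathcal{G}_n}$. (A1): each $s_n$, $N'\le n\le N$, is continuous on $\mathcal{G}_n$. (A2): for each $N'\le n\le N$ there is a real-valued lower semi-continuous $a_n$ on $I$ with $s_n([i_1,\dots,i_n])\le\sum_{k=1}^na_n(i_k)$ for all $i_1,\dots,i_n$. For $N'\le n\le N$, $K_n\subset I^{N!}/\sim_{N!}$ is the set of classes $[i_1,\dots,i_{N!}]$ such that for every $i\in I$, $|\{k:i_k=i\}|$ is divisible by $N!/n$; $P_n:K_n\to\mathcal{G}_n$ sends $[\underbrace{j_1,\dots,j_1}_{N!/n},\dots,\underbrace{j_n,\dots,j_n}_{N!/n}]$ to $[j_1,\dots,j_n]$. Define $\hat s_n=s_n\circ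 P_n$ on $K_n$ and $\hat s_n=0$ off $K_n$, and $\hat s=\max_{N'\le n\le N}\frac{N}{n}\hat s_n$ on $I^{N!}/\sim_{N!}$. *)

theory Defs
  imports "HOL-Analysis.Analysis" "HOL-Probability.Probability" "HOL-Library.Multiset"
begin

definition quotient_topology :: "'a topology \<Rightarrow> ('a \<Rightarrow> 'b) \<Rightarrow> 'b topology" where
  "quotient_topology X q =
     topology (\<lambda>U. U \<subseteq> q ` topspace X \<and> openin X {x \<in> topspace X. q x \<in> U})"

text \<open>Class [i_1,...,i_n] of a tuple x in I^n (tuples = extensional functions on {..<n}).\<close>
definition group_of :: "nat \<Rightarrow> (nat \<Rightarrow> 'a) \<Rightarrow> 'a multiset" where
  "group_of n x = image_mset x (mset_set {..<n})"

definition groups_top :: "'a::metric_space set \<Rightarrow> nat \<Rightarrow> 'a multiset topology" where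
  "groups_top I n = quotient_topology (product_topology (\<lambda>_. top_of_set I) {..<n}) (group_of n)"

definition usc_map :: "'a topology \<Rightarrow> ('a \<Rightarrow> real) \<Rightarrow> bool" where
  "usc_map X f \<longleftrightarrow> (\<forall>t. openin X {x \<in> topspace X. f x < t})"

definition lsc_map :: "'a topology \<Rightarrow> ('a \<Rightarrow> real) \<Rightarrow> bool" where
  "lsc_map X f \<longleftrightarrow> (\<forall>t. openin X {x \<in> topspace X. f x > t})"

definition in_K :: "nat \<Rightarrow> nat \<Rightarrow> 'a multiset \<Rightarrow> bool" where
  "in_K N n M \<longleftrightarrow> (\<forall>i. (fact N div n) dvd count M i)"

definition P_map :: "nat \<Rightarrow> nat \<Rightarrow> 'a multiset \<Rightarrow> 'a multiset" where
  "P_map N n M = (\<Sum>i\<in>set_mset M. replicate_mset (count M i div (fact N div n)) i)"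

definition s_hat_n :: "('a multiset \<Rightarrow> real) \<Rightarrow> nat \<Rightarrow> nat \<Rightarrow> 'a multiset \<Rightarrow> real" where
  "s_hat_n s N n M = (if in_K N n M then s (P_map N n M) else 0)"

definition s_hat :: "('a multiset \<Rightarrow> real) \<Rightarrow> nat \<Rightarrow> nat \<Rightarrow> 'a multiset \<Rightarrow> real" where
  "s_hat s N' N M = Max ((\<lambda>n. real N / real n * s_hat_n s N n M) ` {N'..N})"

end

theory Submission imports Defs "HOL-Combinatorics.Permutations"
begin

lemma quot_istop: "istopology (\<lambda>U. U \<subseteq> q ` topspace X \<and> openin X {x \<in> topspace X. q x \<in> U})"
proof -
  have 1: "S \<inter> T \<subseteq> q ` topspace X \<and> openin X {x \<in> topspace X. q x \<in> S \<inter> T}"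
    if "S \<subseteq> q ` topspace X \<and> openin X {x \<in> topspace X. q x \<in> S}"
      "T \<subseteq> q ` topspace X \<and> openin X {x \<in> topspace X. q x \<in> T}" for S T
  proof -
    have "openin X ({x \<in> topspace X. q x \<in> S} \<inter> {x \<in> topspace X. q x \<in> T})" using that by blast
    moreover have "{x \<in> topspace X. q x \<in> S} \<inter> {x \<in> topspace X. q x \<in> T} = {x \<in> topspace X. q x \<in> S \<inter> T}" by blast
    ultimately show ?thesis using that by auto
  qed
  have 2: "\<Union>K \<subseteq> q ` topspace X \<and> openin X {x \<in> topspace X. q x \<in> \<Union>K}"
    if K: "\<forall>U\<in>K. U \<subseteq> q ` topspace X \<and> openin X {x \<in> topspace X. q x \<in> U}" for K
  proof -
    have "openin X (\<Union>U\<in>K. {x \<in> topspace X. q x \<in> U})" using K by blast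
    moreover have "(\<Union>U\<in>K. {x \<in> topspace X. q x \<in> U}) = {x \<in> topspace X. q x \<in> \<Union>K}" by blast
    ultimately show ?thesis using K by auto
  qed
  show ?thesis unfolding istopology_def using 1 2 by simp
qed

lemma quot_open: "openin (quotient_topology X q) U \<longleftrightarrow> U \<subseteq> q ` topspace X \<and> openin X {x \<in> topspace X. q x \<in> U}"
  unfolding quotient_topology_def topology_inverse'[OF quot_istop] by simp

lemma quot_topspace: "topspace (quotient_topology X q) = q ` topspace X"
proof -
  have e: "{x \<in> topspace X. q x \<in> q ` topspace X} = topspace X" by auto
  have "openin (quotient_topology X q) (q ` topspace X)"
    unfolding quot_open e by auto
  then show ?thesis
    by (metis openin_subset openin_topspace quot_open subset_antisym)
qed

lemma quot_cont: "continuous_map X (quotient_topology X q) q"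
  unfolding continuous_map_def quot_topspace using quot_open by blast

lemma quot_usc:
  assumes "\<And>t. openin X {x \<in> topspace X. f (q x) < t}"
  shows "usc_map (quotient_topology X q) f"
  unfolding usc_map_def quot_open quot_topspace
proof
  fix t
  have "{x \<in> topspace X. q x \<in> {M \<in> q ` topspace X. f M < t}} = {x \<in> topspace X. f (q x) < t}" by auto
  then show "{x \<in> q ` topspace X. f x < t} \<subseteq> q ` topspace X \<and>
         openin X {x \<in> topspace X. q x \<in> {x \<in> q ` topspace X. f x < t}}" using assms by auto
qed

lemma group_of_mset: "group_of m x = mset (map x [0..<m])"
  by (simp add: group_of_def atLeast0LessThan)

lemma group_of_cong: "(\<And>k. k < m \<Longrightarrow> x k = y k) \<Longrightarrow> group_of m x = group_of m y"
  unfolding group_of_def by (intro image_mset_cong) auto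

lemma size_group_of[simp]: "size (group_of m x) = m"
  by (simp add: group_of_def)

lemma set_group_of: "set_mset (group_of m x) = x ` {..<m}"
  by (simp add: group_of_def)

lemma group_rep: "group_of (n*d) (\<lambda>k. z (k div d)) = repeat_mset d (group_of n z)"
proof (induction n)
  case 0 then show ?case by (simp add: group_of_def)
next
  case (Suc n)
  have "[0..<Suc n * d] = [0..<n*d] @ [n*d..<n*d+d]"
    by (metis add.commute le_add2 mult_Suc upt_add_eq_append zero_le)
  moreover have "map (\<lambda>k. z (k div d)) [n*d..<n*d+d] = replicate d (z n)"
  proof (rule nth_equalityI)
    show "length (map (\<lambda>k. z (k div d)) [n * d..<n * d + d]) = length (replicate d (z n))" by simp
    fix i assume "i < length (map (\<lambda>k. z (k div d)) [n * d..<n * d + d])"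
    then have "i < d" by simp
    then have "(n*d + i) div d = n" by simp
    then show "map (\<lambda>k. z (k div d)) [n * d..<n * d + d] ! i = replicate d (z n) ! i"
      using \<open>i < d\<close> by (simp add: add.commute)
  qed
  ultimately have "group_of (Suc n * d) (\<lambda>k. z (k div d)) = group_of (n*d) (\<lambda>k. z (k div d)) + replicate_mset d (z n)"
    by (simp add: group_of_mset)
  also have "\<dots> = repeat_mset d (group_of n z) + replicate_mset d (z n)" using Suc by simp
  also have "\<dots> = repeat_mset d (group_of (Suc n) z)"
    by (simp add: group_of_mset multiset_eq_iff algebra_simps)
  finally show ?case .
qed

lemma group_perm:
  assumes "\<sigma> permutes {..<m}"
  shows "group_of m (\<lambda>k. x (\<sigma> k)) = group_of m x"
proof -
  have "group_of m (\<lambda>k. x (\<sigma> k)) = image_mset x (image_mset \<sigma> (mset_set {..<m}))"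
    by (simp add: group_of_def multiset.map_comp comp_def)
  also have "image_mset \<sigma> (mset_set {..<m}) = mset_set {..<m}"
    using assms by (simp add: image_mset_mset_set permutes_inj_on permutes_image)
  finally show ?thesis by (simp add: group_of_def)
qed

lemma group_eq_perm:
  assumes "group_of m x = group_of m y"
  shows "\<exists>\<sigma>. \<sigma> permutes {..<m} \<and> (\<forall>k<m. x k = y (\<sigma> k))"
proof -
  from assms have "mset (map x [0..<m]) = mset (map y [0..<m])" by (simp add: group_of_mset)
  then obtain p where p: "p permutes {..<length (map y [0..<m])}" "permute_list p (map y [0..<m]) = map x [0..<m]"
    by (rule mset_eq_permutation)
  have "\<forall>k<m. x k = y (p k)"
  proof (intro allI impI)
    fix k assume k: "k < m"
    have "x k = map x [0..<m] ! k" using k by simp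
    also have "\<dots> = permute_list p (map y [0..<m]) ! k" using p(2) by simp
    also have "\<dots> = map y [0..<m] ! p k" using k p(1) by (simp add: permute_list_nth)
    moreover have "p k < m" using k p(1) by (metis length_map length_upt lessThan_iff minus_nat.diff_0 permutes_in_image)
    ultimately show "x k = y (p k)" by simp
  qed
  then show ?thesis using p(1) by auto
qed

lemma mset_to_group:
  assumes "size M = n" "set_mset M \<subseteq> I"
  shows "\<exists>z\<in>PiE {..<n} (\<lambda>_. I). group_of n z = M"
proof -
  obtain xs where xs: "mset xs = M" using ex_mset by blast
  then have len: "length xs = n" using assms by auto
  define z where "z = restrict (\<lambda>k. xs ! k) {..<n}"
  have "group_of n z = mset (map (\<lambda>k. xs ! k) [0..<length xs])"
    unfolding group_of_mset z_def len by (intro arg_cong[where f=mset] map_cong) auto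
  also have "\<dots> = M" using xs by (simp add: map_nth)
  finally have "group_of n z = M" .
  moreover have "z \<in> PiE {..<n} (\<lambda>_. I)" unfolding z_def using assms xs len
    by (auto simp: PiE_iff)
  ultimately show ?thesis by blast
qed

lemma count_P: "count (P_map N n M) i = count M i div (fact N div n)"
proof -
  have "count (P_map N n M) i = (\<Sum>j\<in>set_mset M. if i = j then count M j div (fact N div n) else 0)"
    unfolding P_map_def count_sum by (intro sum.cong) auto
  also have "\<dots> = count M i div (fact N div n)"
    by (cases "i \<in># M") (auto simp: not_in_iff)
  finally show ?thesis .
qed

lemma P_rep: "fact N div n > 0 \<Longrightarrow> P_map N n (repeat_mset (fact N div n) P) = P"
  by (simp add: multiset_eq_iff count_P)

lemma K_rep: "in_K N n (repeat_mset (fact N div n) P)"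
  by (simp add: in_K_def)

lemma K_P: "in_K N n M \<Longrightarrow> M = repeat_mset (fact N div n) (P_map N n M)"
  by (auto simp: multiset_eq_iff count_P in_K_def)

lemma fact_split:
  assumes "1 \<le> n" "n \<le> N"
  shows "n * (fact N div n) = fact N" "fact N div n > 0"
proof -
  have "n dvd fact N" using assms dvd_fact by blast
  then show "n * (fact N div n) = fact N" by simp
  have "n \<le> fact N" using assms(2) fact_ge_self order_trans by blast
  then show "fact N div n > 0" using assms by (simp add: div_greater_zero_iff)
qed

lemma K_char:
  assumes "1 \<le> n" "n \<le> N" "x \<in> PiE {..<fact N} (\<lambda>_. I)" "in_K N n (group_of (fact N) x)"
  shows "\<exists>z\<in>PiE {..<n} (\<lambda>_. I). P_map N n (group_of (fact N) x) = group_of n z"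
proof -
  define M where "M = group_of (fact N) x"
  define d where "d = fact N div n"
  have nd: "n * d = fact N" "d > 0" using fact_split[OF assms(1,2)] by (auto simp: d_def)
  have MP: "M = repeat_mset d (P_map N n M)" using K_P[of N n M] assms(4) unfolding M_def d_def by simp
  have "size M = size (repeat_mset d (P_map N n M))" using MP by simp
  then have "fact N = d * size (P_map N n M)" unfolding M_def by simp
  then have "d * size (P_map N n M) = d * n" using nd by (simp add: mult.commute)
  then have sz: "size (P_map N n M) = n" using nd by simp
  have "set_mset (P_map N n M) \<subseteq> set_mset M"
  proof
    fix i assume "i \<in># P_map N n M"
    then have "count (P_map N n M) i > 0" by simp
    moreover have "count M i = d * count (P_map N n M) i"
      using arg_cong[OF MP, of "\<lambda>A. count A i"] by simp
    ultimately have "count M i > 0" using nd(2) by simp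
    then show "i \<in># M" by simp
  qed
  also have "\<dots> \<subseteq> I" using assms(3) unfolding M_def set_group_of by (auto simp: PiE_iff)
  finally obtain z where "z \<in> PiE {..<n} (\<lambda>_. I)" "group_of n z = P_map N n M"
    using mset_to_group[OF sz, of I] by blast
  then show ?thesis unfolding M_def by metis
qed

lemma rep_K:
  assumes "1 \<le> n" "n \<le> N"
    "group_of (fact N) y = group_of (fact N) (\<lambda>k. z (k div (fact N div n)))"
  shows "in_K N n (group_of (fact N) y) \<and> P_map N n (group_of (fact N) y) = group_of n z"
proof -
  have nd: "n * (fact N div n) = fact N" "fact N div n > 0" using fact_split[OF assms(1,2)] by auto
  have "group_of (fact N) y = repeat_mset (fact N div n) (group_of n z)"
    using assms(3) group_rep[of n "fact N div n" z] nd(1) by simp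
  then show ?thesis using K_rep[of N n "group_of n z"] P_rep[OF nd(2), of "group_of n z"] by simp
qed

lemma closed_level:
  fixes I :: "'a::metric_space set"
  assumes "compact I" "1 \<le> n" "n \<le> N"
    and cont: "continuous_map (groups_top I n) euclideanreal s"
  shows "closedin (product_topology (\<lambda>_. top_of_set I) {..<fact N})
     {x \<in> PiE {..<fact N} (\<lambda>_. I). in_K N n (group_of (fact N) x) \<and> t \<le> s (P_map N n (group_of (fact N) x))}"
proof -
  define m :: nat where "m = fact N"
  define d :: nat where "d = fact N div n"
  have nd: "n * d = m" "d > 0" using fact_split[OF assms(2,3)] by (auto simp: d_def m_def)
  define Xn where "Xn = product_topology (\<lambda>_. top_of_set I) {..<n}"
  define Xm where "Xm = product_topology (\<lambda>_. top_of_set I) {..<m}"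
  have tXn: "topspace Xn = PiE {..<n} (\<lambda>_. I)" unfolding Xn_def by simp
  have tXm: "topspace Xm = PiE {..<m} (\<lambda>_. I)" unfolding Xm_def by simp
  define C where "C = {z \<in> topspace Xn. (\<lambda>z. s (group_of n z)) z \<in> {t..}}"
  have cc: "continuous_map Xn euclideanreal (\<lambda>z. s (group_of n z))"
    using continuous_map_compose[OF quot_cont cont[unfolded groups_top_def]]
    unfolding Xn_def comp_def by simp
  have "closedin Xn C" unfolding C_def
    by (rule closedin_continuous_map_preimage[OF cc]) simp
  moreover have "compact_space Xn" unfolding Xn_def
    using assms(1) by (auto simp: compact_space_product_topology intro: compact_space_subtopology)
  ultimately have Ccomp: "compactin Xn C" using closedin_compact_space by blast
  define f :: "(nat \<Rightarrow> nat) \<Rightarrow> (nat \<Rightarrow> 'a) \<Rightarrow> nat \<Rightarrow> 'a" where "f = (\<lambda>\<sigma> z. restrict (\<lambda>k. z (\<sigma> k div d)) {..<m})"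
  have fc: "continuous_map Xn Xm (f \<sigma>)" if "\<sigma> permutes {..<m}" for \<sigma>
    unfolding Xm_def continuous_map_componentwise
  proof (intro conjI ballI)
    show "f \<sigma> ` topspace Xn \<subseteq> extensional {..<m}" unfolding f_def by auto
    fix k assume k: "k \<in> {..<m}"
    then have "\<sigma> k < m" using that permutes_in_image by fastforce
    then have "\<sigma> k div d < n" using nd by (metis less_mult_imp_div_less mult.commute)
    then have "continuous_map Xn (top_of_set I) (\<lambda>z. z (\<sigma> k div d))"
      unfolding Xn_def by (intro continuous_map_product_projection) auto
    then show "continuous_map Xn (top_of_set I) (\<lambda>x. f \<sigma> x k)"
      unfolding f_def using k by simp
  qed
  define S where "S = (\<Union>\<sigma>\<in>{\<sigma>. \<sigma> permutes {..<m}}. f \<sigma> ` C)"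
  have "compactin Xm S" unfolding S_def
    by (intro compactin_Union) (auto intro: image_compactin[OF Ccomp fc] simp: finite_permutations)
  moreover have "Hausdorff_space Xm" unfolding Xm_def
    by (simp add: Hausdorff_space_product_topology Hausdorff_space_subtopology)
  ultimately have Sc: "closedin Xm S" using compactin_imp_closedin by blast
  have "{x \<in> PiE {..<fact N} (\<lambda>_. I). in_K N n (group_of (fact N) x) \<and> t \<le> s (P_map N n (group_of (fact N) x))} = S"
  proof (intro equalityI subsetI)
    fix x assume "x \<in> {x \<in> PiE {..<fact N} (\<lambda>_. I). in_K N n (group_of (fact N) x) \<and> t \<le> s (P_map N n (group_of (fact N) x))}"
    then have x: "x \<in> PiE {..<m} (\<lambda>_. I)" "in_K N n (group_of m x)" "t \<le> s (P_map N n (group_of m x))"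
      unfolding m_def by auto
    obtain z where z: "z \<in> PiE {..<n} (\<lambda>_. I)" "P_map N n (group_of m x) = group_of n z"
      using K_char[OF assms(2,3)] x unfolding m_def by blast
    have zC: "z \<in> C" unfolding C_def tXn using z x(3) by auto
    have "group_of m x = repeat_mset d (group_of n z)"
      using K_P[OF x(2)] z(2) unfolding d_def by simp
    also have "\<dots> = group_of m (\<lambda>k. z (k div d))" using group_rep[of n d z] nd by simp
    finally obtain \<sigma> where \<sigma>: "\<sigma> permutes {..<m}" "\<forall>k<m. x k = z (\<sigma> k div d)"
      using group_eq_perm by blast
    have "x = f \<sigma> z"
    proof
      fix k show "x k = f \<sigma> z k"
        using \<sigma>(2) x(1) unfolding f_def by (cases "k < m") (auto simp: PiE_iff extensional_def)
    qed
    then show "x \<in> S" unfolding S_def using \<sigma>(1) zC by blast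
  next
    fix x assume "x \<in> S"
    then obtain \<sigma> z where \<sigma>: "\<sigma> permutes {..<m}" and zC: "z \<in> C" and xf: "x = f \<sigma> z"
      unfolding S_def by blast
    have z: "z \<in> PiE {..<n} (\<lambda>_. I)" "t \<le> s (group_of n z)" using zC unfolding C_def tXn by auto
    have "x \<in> topspace Xm" using fc[OF \<sigma>] zC xf unfolding C_def continuous_map_def by blast
    then have xP: "x \<in> PiE {..<m} (\<lambda>_. I)" using tXm by simp
    have "group_of m x = group_of m (\<lambda>k. (\<lambda>j. z (j div d)) (\<sigma> k))"
      unfolding xf f_def by (intro group_of_cong) simp
    also have "\<dots> = group_of m (\<lambda>j. z (j div d))" using group_perm[OF \<sigma>, of "\<lambda>j. z (j div d)"] by simp
    finally have "in_K N n (group_of m x) \<and> P_map N n (group_of m x) = group_of n z"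
      using rep_K[OF assms(2,3)] unfolding m_def d_def by blast
    then show "x \<in> {x \<in> PiE {..<fact N} (\<lambda>_. I). in_K N n (group_of (fact N) x) \<and> t \<le> s (P_map N n (group_of (fact N) x))}"
      using xP z(2) unfolding m_def by auto
  qed
  then show ?thesis using Sc unfolding Xm_def m_def by simp
qed

theorem lemma1:
  fixes I :: "'a::metric_space set"
    and \<mu> :: "'a measure"
    and N N' :: nat
    and s :: "'a multiset \<Rightarrow> real"
  assumes "compact I"
    and "sets \<mu> = sets (restrict_space borel I)"
    and "finite_measure \<mu>"
    and "2 \<le> N" and "1 \<le> N'" and "N' \<le> N"
    and s_nonneg: "\<forall>n\<in>{N'..N}. \<forall>M\<in>topspace (groups_top I n). 0 \<le> s M"
    and A1: "\<forall>n\<in>{N'..N}. continuous_map (groups_top I n) euclideanreal s"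
    and A2: "\<forall>n\<in>{N'..N}. \<exists>a :: 'a \<Rightarrow> real. lsc_map (top_of_set I) a \<and>
               (\<forall>M\<in>topspace (groups_top I n). s M \<le> (\<Sum>i\<in>#M. a i))"
  shows "usc_map (groups_top I (fact N)) (s_hat s N' N) \<and>
         (\<exists>a_hat :: 'a \<Rightarrow> real. lsc_map (top_of_set I) a_hat \<and> integrable \<mu> a_hat \<and>
            (\<forall>M\<in>topspace (groups_top I (fact N)). s_hat s N' N M \<le> (\<Sum>i\<in>#M. a_hat i)))"
proof -
  define m :: nat where "m = fact N"
  define X where "X = (\<lambda>k. product_topology (\<lambda>_::nat. top_of_set I) {..<k})"
  have tX: "\<And>k. topspace (X k) = PiE {..<k} (\<lambda>_. I)" unfolding X_def by simp
  have gt: "\<And>k. groups_top I k = quotient_topology (X k) (group_of k)"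
    unfolding groups_top_def X_def by simp
  have tG: "\<And>k. topspace (groups_top I k) = group_of k ` PiE {..<k} (\<lambda>_. I)"
    unfolding gt quot_topspace tX by simp
  have Npos: "real N > 0" using assms(4) by simp
  have nonneg: "0 \<le> s_hat_n s N n (group_of m x)"
    if n: "n \<in> {N'..N}" and x: "x \<in> PiE {..<m} (\<lambda>_. I)" for n x
  proof (cases "in_K N n (group_of m x)")
    case True
    have n1: "1 \<le> n" "n \<le> N" using n assms(5) by auto
    obtain z where z: "z \<in> PiE {..<n} (\<lambda>_. I)" "P_map N n (group_of m x) = group_of n z"
      using K_char[OF n1] x True unfolding m_def by blast
    have "group_of n z \<in> topspace (groups_top I n)" using z(1) tG by blast
    then show ?thesis using s_nonneg n True z(2) unfolding s_hat_n_def by auto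
  qed (simp add: s_hat_n_def)
  have fin: "finite {N'..N}" "{N'..N} \<noteq> {}" using assms(6) by auto
  have usc: "usc_map (groups_top I m) (s_hat s N' N)"
    unfolding gt
  proof (rule quot_usc)
    fix t :: real
    define F where "F = (\<lambda>n. {x \<in> topspace (X m). t * real n / real N \<le> s_hat_n s N n (group_of m x)})"
    have Fc: "closedin (X m) (F n)" if n: "n \<in> {N'..N}" for n
    proof (cases "t * real n / real N \<le> 0")
      case True
      then have "F n = topspace (X m)" unfolding F_def tX using nonneg[OF n] by force
      then show ?thesis by simp
    next
      case False
      have n1: "1 \<le> n" "n \<le> N" using n assms(5) by auto
      have "F n = {x \<in> PiE {..<fact N} (\<lambda>_. I). in_K N n (group_of (fact N) x) \<and>
                   t * real n / real N \<le> s (P_map N n (group_of (fact N) x))}"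
        unfolding F_def tX m_def s_hat_n_def using False by auto
      then show ?thesis
        using closed_level[OF assms(1) n1, of s "t * real n / real N"] A1 n unfolding X_def m_def by simp
    qed
    have "{x \<in> topspace (X m). s_hat s N' N (group_of m x) < t} = topspace (X m) - \<Union>(F ` {N'..N})"
    proof (intro equalityI subsetI)
      fix x assume x: "x \<in> {x \<in> topspace (X m). s_hat s N' N (group_of m x) < t}"
      then have "\<forall>n\<in>{N'..N}. real N / real n * s_hat_n s N n (group_of m x) < t"
        unfolding s_hat_def using fin by (simp add: Max_less_iff)
      moreover have "(real N / real n * v < t) \<longleftrightarrow> (v < t * real n / real N)" if "n \<in> {N'..N}" for n v
      proof -
        have "real n > 0" using that assms(5) by auto
        then show ?thesis using Npos by (simp add: field_simps)
      qed
      ultimately show "x \<in> topspace (X m) - \<Union>(F ` {N'..N})" using x unfolding F_def by force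
    next
      fix x assume x: "x \<in> topspace (X m) - \<Union>(F ` {N'..N})"
      have "real N / real n * s_hat_n s N n (group_of m x) < t" if "n \<in> {N'..N}" for n
      proof -
        have "real n > 0" using that assms(5) by auto
        moreover have "s_hat_n s N n (group_of m x) < t * real n / real N" using x that unfolding F_def by (force simp: not_le)
        ultimately show ?thesis using Npos by (simp add: field_simps)
      qed
      then show "x \<in> {x \<in> topspace (X m). s_hat s N' N (group_of m x) < t}"
        using x fin unfolding s_hat_def by (simp add: Max_less_iff)
    qed
    moreover have "closedin (X m) (\<Union>(F ` {N'..N}))"
      using Fc fin by (intro closedin_Union) auto
    ultimately show "openin (X m) {x \<in> topspace (X m). s_hat s N' N (group_of m x) < t}"
      by (simp add: openin_diff)
  qed
  define S where "S = (\<Union>n\<in>{N'..N}. (\<lambda>z. s (group_of n z)) ` PiE {..<n} (\<lambda>_. I))"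
  have "compact S" unfolding S_def
  proof (intro compact_UN[OF fin(1)])
    fix n assume n: "n \<in> {N'..N}"
    have cc: "continuous_map (X n) euclideanreal (\<lambda>z. s (group_of n z))"
      using continuous_map_compose[OF quot_cont A1[rule_format, OF n, unfolded gt]]
      unfolding comp_def by simp
    have "compact_space (X n)" unfolding X_def
      using assms(1) by (auto simp: compact_space_product_topology intro: compact_space_subtopology)
    then have "compactin euclideanreal ((\<lambda>z. s (group_of n z)) ` topspace (X n))"
      using image_compactin cc compact_space_def by blast
    then show "compact ((\<lambda>z. s (group_of n z)) ` PiE {..<n} (\<lambda>_. I))" using tX by simp
  qed
  then obtain B0 where B0: "\<forall>v\<in>S. norm v \<le> B0" using compact_imp_bounded bounded_iff by blast
  define B where "B = max B0 0"
  have Bs: "s M \<le> B" if n: "n \<in> {N'..N}" and M: "M \<in> topspace (groups_top I n)" for n M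
  proof -
    from M obtain z where z: "z \<in> PiE {..<n} (\<lambda>_. I)" "M = group_of n z" unfolding tG by blast
    then have "s M \<in> S" unfolding S_def using n by blast
    then show ?thesis using B0 unfolding B_def by force
  qed
  have B0le: "0 \<le> B" unfolding B_def by simp
  have bound: "s_hat s N' N (group_of m x) \<le> real N * B" if x: "x \<in> PiE {..<m} (\<lambda>_. I)" for x
    unfolding s_hat_def
  proof (subst Max_le_iff)
    show "\<forall>a\<in>(\<lambda>n. real N / real n * s_hat_n s N n (group_of m x)) ` {N'..N}. a \<le> real N * B"
    proof
      fix a assume "a \<in> (\<lambda>n. real N / real n * s_hat_n s N n (group_of m x)) ` {N'..N}"
      then obtain n where n: "n \<in> {N'..N}" and a: "a = real N / real n * s_hat_n s N n (group_of m x)" by blast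
      have n1: "1 \<le> n" "n \<le> N" using n assms(5) by auto
      have sb: "s_hat_n s N n (group_of m x) \<le> B"
      proof (cases "in_K N n (group_of m x)")
        case True
        obtain z where z: "z \<in> PiE {..<n} (\<lambda>_. I)" "P_map N n (group_of m x) = group_of n z"
          using K_char[OF n1] x True unfolding m_def by blast
        have "group_of n z \<in> topspace (groups_top I n)" using z(1) tG by blast
        then show ?thesis using Bs[OF n] True z(2) unfolding s_hat_n_def by auto
      qed (simp add: s_hat_n_def B0le)
      have s0: "0 \<le> s_hat_n s N n (group_of m x)" using nonneg[OF n x] .
      have q: "real N / real n \<le> real N" using n1 Npos by (simp add: divide_le_eq)
      have "a \<le> real N / real n * B" unfolding a using sb n1 Npos by (intro mult_left_mono) auto
      also have "\<dots> \<le> real N * B" using q B0le by (intro mult_right_mono) auto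
      finally show "a \<le> real N * B" .
    qed
  qed (use fin in auto)
  define c where "c = real N * B / real m"
  have mpos: "real m > 0" unfolding m_def by simp
  have lsc: "lsc_map (top_of_set I) (\<lambda>_. c)"
    unfolding lsc_map_def by (intro allI, case_tac "c > t") auto
  have int: "integrable \<mu> (\<lambda>_. c)" using assms(3) finite_measure.integrable_const by blast
  have "s_hat s N' N M \<le> (\<Sum>i\<in>#M. c)" if M: "M \<in> topspace (groups_top I m)" for M
  proof -
    from M obtain x where x: "x \<in> PiE {..<m} (\<lambda>_. I)" "M = group_of m x" unfolding tG by blast
    have "(\<Sum>i\<in>#M. c) = real N * B" unfolding x(2) c_def using mpos by simp
    then show ?thesis using bound[OF x(1)] x(2) by simp
  qed
  then show ?thesis using usc lsc int unfolding m_def by blast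
qed
end
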